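(* If $(L,\alpha_L)$ is an $\alpha$-perfect Hom-Leibniz algebra, then the map $\mathrm{Aut}(L,\alpha_L)\to\{g\in\mathrm{Aut}(\mathfrak{uce}_\alpha(L),\overline{\alpha}):g(\mathrm{Ker}\,U_\alpha)=\mathrm{Ker}\,U_\alpha\}$, $h\mapsto\mathfrak{uce}_\alpha(h)$, is a group isomorphism.
   Context: Hom-Leibniz algebras are multiplicative: $(L,\alpha_L)$ is a $\mathbb{K}$-vector space with bilinear bracket and linear $\alpha_L$ such that $[\alpha_L(x),[y,z]]=[[x,y],\alpha_L(z)]-[[x,z],\alpha_L(y)]$ and $\alpha_L[x,y]=[\alpha_L(x),\alpha_L(y)]$; homomorphisms preserve brackets and commute with structure maps; $\mathrm{Aut}$ denotes the group of bijective homomorphisms. $(L,\alpha_L)$ is $\alpha$-perfect if $L=[\alpha_L(L),\alpha_L(L)]$. For $\alpha$-perfect $(L,\alpha_L)$: $I_L\subseteq\alpha_L(L)\otimes\alpha_L(L)$ is spanned by $-[x_1,x_2]\otimes\alpha_L(x_3)+[x_1,x_3]\otimes\alpha_L(x_2)+\alpha_L(x_1)\otimes[x_2,x_3]$; $\mathfrak{uce}_\alpha(L)=(\alpha_L(L)\otimes\alpha_L(L))/I_L$ with classes $\{\alpha_L(x_1),\alpha_L(x_2)\}$, bracket $[\{a,b\},\{c,e\}]=\{[a,b],[c,e]\}$, endomorphism $\overline{\alpha}\{\alpha_L(x_1),\alpha_L(x_2)\}=\{\alpha_L^2(x_1),\alpha_L^2(x_2)\}$, and $U_\alpha:\mathfrak{uce}_\alpha(L)\to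 L$, $U_\alpha\{a,b\}=[a,b]$. For $h\in\mathrm{Aut}(L,\alpha_L)$, $\mathfrak{uce}_\alpha(h)\{\alpha_L(x_1),\alpha_L(x_2)\}=\{\alpha_L(h(x_1)),\alpha_L(h(x_2))\}$. *)

theory Defs
  imports Complex_Main "HOL-Algebra.Group"
begin

text \<open>The underlying vector space is the whole type 'v with scalar multiplication s
  over the field 'k; br is the bracket and al the structure map alpha_L.\<close>

definition hom_leibniz ::
  "('k::field \<Rightarrow> 'v::ab_group_add \<Rightarrow> 'v) \<Rightarrow> ('v \<Rightarrow> 'v \<Rightarrow> 'v) \<Rightarrow> ('v \<Rightarrow> 'v) \<Rightarrow> bool" where
  "hom_leibniz s br al \<longleftrightarrow>
     vector_space s
   \<and> (\<forall>y. Vector_Spaces.linear s s (\<lambda>x. br x y))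
   \<and> (\<forall>x. Vector_Spaces.linear s s (br x))
   \<and> Vector_Spaces.linear s s al
   \<and> (\<forall>x y z. br (al x) (br y z) = br (br x y) (al z) - br (br x z) (al y))
   \<and> (\<forall>x y. al (br x y) = br (al x) (al y))"

definition alpha_perfect ::
  "('k::field \<Rightarrow> 'v::ab_group_add \<Rightarrow> 'v) \<Rightarrow> ('v \<Rightarrow> 'v \<Rightarrow> 'v) \<Rightarrow> ('v \<Rightarrow> 'v) \<Rightarrow> bool" where
  "alpha_perfect s br al \<longleftrightarrow>
     module.span s {br (al x) (al y) | x y. True} = UNIV"

definition leib_hom ::
  "('k::field \<Rightarrow> 'v::ab_group_add \<Rightarrow> 'v) \<Rightarrow> ('v \<Rightarrow> 'v \<Rightarrow> 'v) \<Rightarrow> ('v \<Rightarrow> 'v) \<Rightarrow> ('v \<Rightarrow> 'v) \<Rightarrow> bool" where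
  "leib_hom s br al h \<longleftrightarrow> Vector_Spaces.linear s s h
     \<and> (\<forall>x y. h (br x y) = br (h x) (h y)) \<and> (\<forall>x. h (al x) = al (h x))"

definition AutL ::
  "('k::field \<Rightarrow> 'v::ab_group_add \<Rightarrow> 'v) \<Rightarrow> ('v \<Rightarrow> 'v \<Rightarrow> 'v) \<Rightarrow> ('v \<Rightarrow> 'v) \<Rightarrow> ('v \<Rightarrow> 'v) monoid" where
  "AutL s br al = \<lparr>carrier = {h. leib_hom s br al h \<and> bij h}, mult = (\<circ>), one = id\<rparr>"

text \<open>The tensor product alpha(L) \<otimes> alpha(L) is realised as the free vector space on
  pairs in alpha(L) x alpha(L) (finitely supported functions to 'k) modulo the bilinearity
  relations; we additionally quotient by the generators of I_L. Elements of uce_alpha(L)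
  are equivalence classes (sets of representatives).\<close>

definition supp :: "('a \<Rightarrow> 'k::zero) \<Rightarrow> 'a set" where
  "supp f = {p. f p \<noteq> 0}"

definition delta :: "'a \<Rightarrow> 'a \<Rightarrow> 'k::{zero,one}" where
  "delta p = (\<lambda>q. if q = p then 1 else 0)"

definition FV :: "('v \<Rightarrow> 'v) \<Rightarrow> ('v \<times> 'v \<Rightarrow> 'k::field) set" where
  "FV al = {f. finite (supp f) \<and> supp f \<subseteq> range al \<times> range al}"

definition rel_gens ::
  "('k::field \<Rightarrow> 'v::ab_group_add \<Rightarrow> 'v) \<Rightarrow> ('v \<Rightarrow> 'v \<Rightarrow> 'v) \<Rightarrow> ('v \<Rightarrow> 'v) \<Rightarrow> ('v \<times> 'v \<Rightarrow> 'k) set" where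
  "rel_gens s br al =
     {(\<lambda>q. delta (a + a', b) q - delta (a, b) q - delta (a', b) q) | a a' b.
         a \<in> range al \<and> a' \<in> range al \<and> b \<in> range al}
   \<union> {(\<lambda>q. delta (a, b + b') q - delta (a, b) q - delta (a, b') q) | a b b'.
         a \<in> range al \<and> b \<in> range al \<and> b' \<in> range al}
   \<union> {(\<lambda>q. delta (s c a, b) q - c * delta (a, b) q) | c a b.
         a \<in> range al \<and> b \<in> range al}
   \<union> {(\<lambda>q. delta (a, s c b) q - c * delta (a, b) q) | c a b.
         a \<in> range al \<and> b \<in> range al}
   \<union> {(\<lambda>q. - delta (br x1 x2, al x3) q + delta (br x1 x3, al x2) q + delta (al x1, br x2 x3) q)
         | x1 x2 x3. True}"

inductive_set relsp ::
  "('k::field \<Rightarrow> 'v::ab_group_add \<Rightarrow> 'v) \<Rightarrow> ('v \<Rightarrow> 'v \<Rightarrow> 'v) \<Rightarrow> ('v \<Rightarrow> 'v) \<Rightarrow> ('v \<times> 'v \<Rightarrow> 'k) set"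
  for s br al where
  zero: "(\<lambda>_. 0) \<in> relsp s br al"
| gen: "g \<in> rel_gens s br al \<Longrightarrow> g \<in> relsp s br al"
| add: "f \<in> relsp s br al \<Longrightarrow> g \<in> relsp s br al \<Longrightarrow> (\<lambda>p. f p + g p) \<in> relsp s br al"
| smul: "f \<in> relsp s br al \<Longrightarrow> (\<lambda>p. c * f p) \<in> relsp s br al"

definition cls ::
  "('k::field \<Rightarrow> 'v::ab_group_add \<Rightarrow> 'v) \<Rightarrow> ('v \<Rightarrow> 'v \<Rightarrow> 'v) \<Rightarrow> ('v \<Rightarrow> 'v) \<Rightarrow> ('v \<times> 'v \<Rightarrow> 'k) \<Rightarrow> ('v \<times> 'v \<Rightarrow> 'k) set" where
  "cls s br al f = {g \<in> FV al. (\<lambda>p. f p - g p) \<in> relsp s br al}"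

definition UC ::
  "('k::field \<Rightarrow> 'v::ab_group_add \<Rightarrow> 'v) \<Rightarrow> ('v \<Rightarrow> 'v \<Rightarrow> 'v) \<Rightarrow> ('v \<Rightarrow> 'v) \<Rightarrow> ('v \<times> 'v \<Rightarrow> 'k) set set" where
  "UC s br al = cls s br al ` FV al"

definition rep :: "'a set \<Rightarrow> 'a" where
  "rep X = (SOME f. f \<in> X)"

definition uc_add where
  "uc_add s br al X Y = cls s br al (\<lambda>p. rep X p + rep Y p)"

definition uc_smul where
  "uc_smul s br al c X = cls s br al (\<lambda>p. c * rep X p)"

text \<open>Bracket: [{a,b},{c,e}] = {[a,b],[c,e]}, extended bilinearly.\<close>

definition uc_br where
  "uc_br s br al X Y = cls s br al (\<lambda>r.
      \<Sum>p\<in>supp (rep X). \<Sum>q\<in>supp (rep Y).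
         rep X p * rep Y q * delta (br (fst p) (snd p), br (fst q) (snd q)) r)"

text \<open>Push-forward of a finitely supported function along a map of pairs
  (linear extension of {a,b} \<mapsto> {phi(a,b)}).\<close>

definition push :: "('a \<Rightarrow> 'b) \<Rightarrow> ('a \<Rightarrow> 'k::field) \<Rightarrow> 'b \<Rightarrow> 'k" where
  "push \<phi> f = (\<lambda>q. \<Sum>p\<in>{p \<in> supp f. \<phi> p = q}. f p)"

definition uc_alpha where
  "uc_alpha s br al X = cls s br al (push (map_prod al al) (rep X))"

definition U_alpha where
  "U_alpha s br al X = (\<Sum>p\<in>supp (rep X). s (rep X p) (br (fst p) (snd p)))"

definition KerU where
  "KerU s br al = {X \<in> UC s br al. U_alpha s br al X = 0}"

text \<open>uce_alpha(h){alpha x1, alpha x2} = {alpha (h x1), alpha (h x2)} = {h (alpha x1), h (alpha x2)},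
  extended linearly; restricted to the carrier.\<close>

definition uce_map where
  "uce_map s br al h = restrict (\<lambda>X. cls s br al (push (map_prod h h) (rep X))) (UC s br al)"

definition uc_aut where
  "uc_aut s br al g \<longleftrightarrow> g \<in> extensional (UC s br al)
     \<and> bij_betw g (UC s br al) (UC s br al)
     \<and> (\<forall>X\<in>UC s br al. \<forall>Y\<in>UC s br al. g (uc_add s br al X Y) = uc_add s br al (g X) (g Y))
     \<and> (\<forall>c. \<forall>X\<in>UC s br al. g (uc_smul s br al c X) = uc_smul s br al c (g X))
     \<and> (\<forall>X\<in>UC s br al. \<forall>Y\<in>UC s br al. g (uc_br s br al X Y) = uc_br s br al (g X) (g Y))
     \<and> (\<forall>X\<in>UC s br al. g (uc_alpha s br al X) = uc_alpha s br al (g X))"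

definition StabUce where
  "StabUce s br al =
     \<lparr>carrier = {g. uc_aut s br al g \<and> g ` KerU s br al = KerU s br al},
      mult = (\<lambda>g g'. restrict (g \<circ> g') (UC s br al)),
      one = restrict id (UC s br al)\<rparr>"

end

theory Submission
  imports Defs
begin

locale HL =
  fixes s :: "'k::field \<Rightarrow> 'v::ab_group_add \<Rightarrow> 'v"
    and br :: "'v \<Rightarrow> 'v \<Rightarrow> 'v" and al :: "'v \<Rightarrow> 'v"
  assumes hl: "hom_leibniz s br al"
    and ap: "alpha_perfect s br al"
begin

lemma vs: "vector_space s" using hl by (simp add: hom_leibniz_def)

sublocale v: vector_space s by (rule vs)

lemma lin_al: "Vector_Spaces.linear s s al" using hl by (simp add: hom_leibniz_def)

lemma br_addL: "br (x + x') y = br x y + br x' y"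
  using hl by (simp add: hom_leibniz_def Vector_Spaces.linear_iff)
lemma br_smulL: "br (s c x) y = s c (br x y)"
  using hl by (simp add: hom_leibniz_def Vector_Spaces.linear_iff)
lemma br_addR: "br y (x + x') = br y x + br y x'"
  using hl by (simp add: hom_leibniz_def Vector_Spaces.linear_iff)
lemma br_smulR: "br y (s c x) = s c (br y x)"
  using hl by (simp add: hom_leibniz_def Vector_Spaces.linear_iff)
lemma al_add: "al (x + y) = al x + al y"
  using lin_al by (simp add: Vector_Spaces.linear_iff)
lemma al_smul: "al (s c x) = s c (al x)"
  using lin_al by (simp add: Vector_Spaces.linear_iff)
lemma leib: "br (al x) (br y z) = br (br x y) (al z) - br (br x z) (al y)"
  using hl unfolding hom_leibniz_def by blast
lemma al_br: "al (br x y) = br (al x) (al y)"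
  using hl unfolding hom_leibniz_def by blast

lemma br_zeroL[simp]: "br 0 y = 0"
  using br_smulL[of 0 0 y] by simp
lemma br_zeroR[simp]: "br y 0 = 0"
  using br_smulR[of y 0 0] by simp
lemma al_zero[simp]: "al 0 = 0"
  using al_smul[of 0 0] by simp

lemma surj_al: "surj al"
proof -
  have sub: "v.subspace (range al)"
  proof (rule v.subspaceI)
    show "0 \<in> range al" using al_zero by (metis rangeI)
    show "x + y \<in> range al" if "x \<in> range al" "y \<in> range al" for x y
      using that by (auto simp: al_add[symmetric])
    show "s c x \<in> range al" if "x \<in> range al" for c x
      using that by (auto simp: al_smul[symmetric])
  qed
  have "{br (al x) (al y) | x y. True} \<subseteq> range al"
    by (auto simp: al_br[symmetric])
  then have "v.span {br (al x) (al y) | x y. True} \<subseteq> range al"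
    using v.span_minimal sub by blast
  then show ?thesis using ap unfolding alpha_perfect_def by auto
qed

lemma span_br: "v.span {br a b | a b. True} = UNIV"
proof -
  have "{br (al x) (al y) | x y. True} = {br a b | a b. True}"
    using surj_al by (auto, metis surj_f_inv_f)
  then show ?thesis using ap unfolding alpha_perfect_def by simp
qed


lemma supp_add: fixes f g :: "'a \<Rightarrow> 'k" shows "supp (\<lambda>q. f q + g q) \<subseteq> supp f \<union> supp g"
  by (auto simp: supp_def)
lemma supp_diff: fixes f g :: "'a \<Rightarrow> 'k" shows "supp (\<lambda>q. f q - g q) \<subseteq> supp f \<union> supp g"
  by (auto simp: supp_def)
lemma supp_mult: fixes f :: "'a \<Rightarrow> 'k" shows "supp (\<lambda>q. c * f q) \<subseteq> supp f"
  by (auto simp: supp_def)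
lemma supp_delta: "supp (delta p :: _ \<Rightarrow> 'k) = {p}"
  by (auto simp: supp_def delta_def)
lemma supp_zero: "supp (\<lambda>_. 0::'k) = {}"
  by (auto simp: supp_def)

lemma fin_add: fixes f g :: "'a \<Rightarrow> 'k" shows "finite (supp f) \<Longrightarrow> finite (supp g) \<Longrightarrow> finite (supp (\<lambda>q. f q + g q))"
  using supp_add[of f g] by (meson finite_UnI finite_subset)
lemma fin_diff: fixes f g :: "'a \<Rightarrow> 'k" shows "finite (supp f) \<Longrightarrow> finite (supp g) \<Longrightarrow> finite (supp (\<lambda>q. f q - g q))"
  using supp_diff[of f g] by (meson finite_UnI finite_subset)
lemma fin_mult: fixes f :: "'a \<Rightarrow> 'k" shows "finite (supp f) \<Longrightarrow> finite (supp (\<lambda>q. c * f q))"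
  using supp_mult[of c f] by (meson finite_subset)
lemma fin_delta: "finite (supp (delta p :: _ \<Rightarrow> 'k))"
  by (simp add: supp_delta)

lemma FV_eq: "FV al = {f :: 'v \<times> 'v \<Rightarrow> 'k. finite (supp f)}"
  using surj_al by (auto simp: FV_def)

lemma FV_iff: "(f :: 'v \<times> 'v \<Rightarrow> 'k) \<in> FV al \<longleftrightarrow> finite (supp f)"
  by (simp add: FV_eq)

lemma gens_fin: "g \<in> rel_gens s br al \<Longrightarrow> finite (supp g)"
  unfolding rel_gens_def
  by (auto intro!: fin_add fin_diff fin_mult fin_delta
      simp: diff_conv_add_uminus[of "- _"] simp del: diff_conv_add_uminus
      | rule fin_diff fin_add fin_delta fin_mult)+


subsection \<open>Relations and classes\<close>

abbreviation "R \<equiv> relsp s br al"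

lemma R_fin: "f \<in> R \<Longrightarrow> finite (supp f)"
  by (induction rule: relsp.induct) (auto simp: supp_zero gens_fin intro: fin_add fin_mult)

lemma R_add: "f \<in> R \<Longrightarrow> g \<in> R \<Longrightarrow> (\<lambda>p. f p + g p) \<in> R"
  by (rule relsp.add)
lemma R_smul: "f \<in> R \<Longrightarrow> (\<lambda>p. c * f p) \<in> R"
  by (rule relsp.smul)
lemma R_neg: "f \<in> R \<Longrightarrow> (\<lambda>p. - f p) \<in> R"
  using R_smul[of f "-1"] by simp
lemma R_diff: "f \<in> R \<Longrightarrow> g \<in> R \<Longrightarrow> (\<lambda>p. f p - g p) \<in> R"
  using R_add[OF _ R_neg[of g], of f] by simp
lemma R_zero: "(\<lambda>_. 0) \<in> R" by (rule relsp.zero)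
lemma R_gen: "g \<in> rel_gens s br al \<Longrightarrow> g \<in> R" by (rule relsp.gen)

definition eqv :: "('v \<times> 'v \<Rightarrow> 'k) \<Rightarrow> ('v \<times> 'v \<Rightarrow> 'k) \<Rightarrow> bool" where
  "eqv f g \<longleftrightarrow> (\<lambda>p. f p - g p) \<in> R"

lemma eqv_refl: "eqv f f"
  using R_zero by (simp add: eqv_def)
lemma eqv_sym: "eqv f g \<Longrightarrow> eqv g f"
  unfolding eqv_def using R_neg by fastforce
lemma eqv_trans: "eqv f g \<Longrightarrow> eqv g h \<Longrightarrow> eqv f h"
  unfolding eqv_def using R_add by fastforce
lemma eqv_add: "eqv f f' \<Longrightarrow> eqv g g' \<Longrightarrow> eqv (\<lambda>p. f p + g p) (\<lambda>p. f' p + g' p)"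
  unfolding eqv_def using R_add[of "\<lambda>p. f p - f' p" "\<lambda>p. g p - g' p"] by (simp add: algebra_simps)
lemma eqv_smul: "eqv f f' \<Longrightarrow> eqv (\<lambda>p. c * f p) (\<lambda>p. c * f' p)"
  unfolding eqv_def using R_smul[of "\<lambda>p. f p - f' p" c] by (simp add: algebra_simps)
lemma eqv_R: "eqv f g \<longleftrightarrow> (\<lambda>p. f p - g p) \<in> R" by (simp add: eqv_def)
lemma eqv_zero_R: "f \<in> R \<Longrightarrow> eqv f (\<lambda>_. 0)" by (simp add: eqv_def)
lemma eqv_fin: "eqv f g \<Longrightarrow> finite (supp g) \<Longrightarrow> finite (supp f)"
proof -
  assume "eqv f g" "finite (supp g)"
  then have "finite (supp (\<lambda>p. (f p - g p) + g p))"
    using R_fin fin_add unfolding eqv_def by blast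
  then show ?thesis by simp
qed

lemma cls_alt: "cls s br al f = {g. finite (supp g) \<and> eqv f g}"
  by (auto simp: cls_def FV_iff eqv_def)

lemma cls_cong: "eqv f g \<Longrightarrow> cls s br al f = cls s br al g"
  unfolding cls_alt using eqv_trans eqv_sym by blast

lemma cls_self: "finite (supp f) \<Longrightarrow> f \<in> cls s br al f"
  by (simp add: cls_alt eqv_refl)

lemma cls_eq_iff: "finite (supp f) \<Longrightarrow> cls s br al f = cls s br al g \<longleftrightarrow> eqv f g"
  using cls_cong cls_self unfolding cls_alt by (metis (mono_tags, lifting) eqv_sym mem_Collect_eq)

abbreviation "UCs \<equiv> UC s br al"

lemma UC_alt: "UCs = {cls s br al f | f. finite (supp f)}"
  by (auto simp: UC_def FV_iff)

lemma cls_in_UC: "finite (supp f) \<Longrightarrow> cls s br al f \<in> UCs"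
  by (auto simp: UC_alt)

lemma rep_cls: "finite (supp f) \<Longrightarrow> eqv (rep (cls s br al f)) f"
proof -
  assume f: "finite (supp f)"
  have "rep (cls s br al f) \<in> cls s br al f"
    unfolding rep_def by (rule someI[of "\<lambda>g. g \<in> cls s br al f" f, OF cls_self[OF f]])
  then show ?thesis by (simp add: cls_alt eqv_sym)
qed

lemma rep_fin: "X \<in> UCs \<Longrightarrow> finite (supp (rep X))"
  unfolding UC_alt using rep_cls eqv_fin by blast

lemma cls_rep: "X \<in> UCs \<Longrightarrow> cls s br al (rep X) = X"
  unfolding UC_alt using rep_cls cls_cong by blast

lemma UC_cases: "X \<in> UCs \<Longrightarrow> (\<And>f. finite (supp f) \<Longrightarrow> X = cls s br al f \<Longrightarrow> P) \<Longrightarrow> P"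
  unfolding UC_alt by blast

lemma uc_add_cls: "finite (supp f) \<Longrightarrow> finite (supp g) \<Longrightarrow>
    uc_add s br al (cls s br al f) (cls s br al g) = cls s br al (\<lambda>p. f p + g p)"
  unfolding uc_add_def by (intro cls_cong eqv_add rep_cls)

lemma uc_smul_cls: "finite (supp f) \<Longrightarrow>
    uc_smul s br al c (cls s br al f) = cls s br al (\<lambda>p. c * f p)"
  unfolding uc_smul_def by (intro cls_cong eqv_smul rep_cls)

lemma uc_add_UC: "X \<in> UCs \<Longrightarrow> Y \<in> UCs \<Longrightarrow> uc_add s br al X Y \<in> UCs"
  by (auto elim!: UC_cases simp: uc_add_cls intro!: cls_in_UC fin_add)
lemma uc_smul_UC: "X \<in> UCs \<Longrightarrow> uc_smul s br al c X \<in> UCs"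
  by (auto elim!: UC_cases simp: uc_smul_cls intro!: cls_in_UC fin_mult)


subsection \<open>The linear map U\<close>

definition Lin :: "('v \<times> 'v \<Rightarrow> 'k) \<Rightarrow> 'v" where
  "Lin f = (\<Sum>p\<in>supp f. s (f p) (br (fst p) (snd p)))"

lemma Lin_sum: "finite S \<Longrightarrow> supp f \<subseteq> S \<Longrightarrow> Lin f = (\<Sum>p\<in>S. s (f p) (br (fst p) (snd p)))"
  unfolding Lin_def by (rule sum.mono_neutral_left) (auto simp: supp_def)

lemma Lin_add: "finite (supp f) \<Longrightarrow> finite (supp g) \<Longrightarrow> Lin (\<lambda>q. f q + g q) = Lin f + Lin g"
proof -
  assume f: "finite (supp f)" and g: "finite (supp g)"
  let ?S = "supp f \<union> supp g"
  have "Lin (\<lambda>q. f q + g q) = (\<Sum>p\<in>?S. s (f p + g p) (br (fst p) (snd p)))"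
    using f g supp_add[of f g] by (intro Lin_sum) auto
  also have "\<dots> = (\<Sum>p\<in>?S. s (f p) (br (fst p) (snd p))) + (\<Sum>p\<in>?S. s (g p) (br (fst p) (snd p)))"
    by (simp add: v.scale_left_distrib sum.distrib)
  also have "\<dots> = Lin f + Lin g"
    using f g Lin_sum[of ?S f] Lin_sum[of ?S g] by auto
  finally show ?thesis .
qed

lemma Lin_smul: "finite (supp f) \<Longrightarrow> Lin (\<lambda>q. c * f q) = s c (Lin f)"
proof -
  assume f: "finite (supp f)"
  have "Lin (\<lambda>q. c * f q) = (\<Sum>p\<in>supp f. s (c * f p) (br (fst p) (snd p)))"
    using f supp_mult[of c f] by (intro Lin_sum) auto
  also have "\<dots> = s c (Lin f)"
    by (simp add: Lin_def v.scale_sum_right)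
  finally show ?thesis .
qed

lemma Lin_neg: "finite (supp f) \<Longrightarrow> Lin (\<lambda>q. - f q) = - Lin f"
  using Lin_smul[of f "-1"] by simp

lemma Lin_diff: "finite (supp f) \<Longrightarrow> finite (supp g) \<Longrightarrow> Lin (\<lambda>q. f q - g q) = Lin f - Lin g"
  using Lin_add[of f "\<lambda>q. - g q"] Lin_neg[of g] supp_mult[of "-1" g] 
  by (simp add: finite_subset)

lemma Lin_delta: "Lin (delta p) = br (fst p) (snd p)"
  unfolding Lin_def supp_delta by (simp add: delta_def)

lemma Lin_zero: "Lin (\<lambda>_. 0) = 0"
  by (simp add: Lin_def supp_zero)

lemma fin_neg: "finite (supp f) \<Longrightarrow> finite (supp (\<lambda>q. - (f q::'k)))"
  using fin_mult[of f "-1"] by simp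

lemmas fin_intros = fin_add fin_diff fin_mult fin_delta fin_neg


lemma Lin_gens: "g \<in> rel_gens s br al \<Longrightarrow> Lin g = 0"
proof -
  assume "g \<in> rel_gens s br al"
  then consider
    (1) a a' b where "g = (\<lambda>q. delta (a + a', b) q - delta (a, b) q - delta (a', b) q)"
  | (2) a b b' where "g = (\<lambda>q. delta (a, b + b') q - delta (a, b) q - delta (a, b') q)"
  | (3) c a b where "g = (\<lambda>q. delta (s c a, b) q - c * delta (a, b) q)"
  | (4) c a b where "g = (\<lambda>q. delta (a, s c b) q - c * delta (a, b) q)"
  | (5) x1 x2 x3 where "g = (\<lambda>q. - delta (br x1 x2, al x3) q + delta (br x1 x3, al x2) q + delta (al x1, br x2 x3) q)"
    unfolding rel_gens_def by blast
  then show ?thesis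
  proof cases
    case 1 then show ?thesis
      by (simp add: Lin_diff fin_intros Lin_delta br_addL)
  next
    case 2 then show ?thesis
      by (simp add: Lin_diff fin_intros Lin_delta br_addR)
  next
    case 3 then show ?thesis
      by (simp add: Lin_diff Lin_smul fin_intros Lin_delta br_smulL)
  next
    case 4 then show ?thesis
      by (simp add: Lin_diff Lin_smul fin_intros Lin_delta br_smulR)
  next
    case 5 
    have "Lin g = - br (br x1 x2) (al x3) + br (br x1 x3) (al x2) + br (al x1) (br x2 x3)"
      unfolding 5 by (simp add: Lin_add Lin_neg Lin_diff fin_intros Lin_delta)
    also have "\<dots> = 0" by (simp add: leib)
    finally show ?thesis .
  qed
qed
lemma Lin_R: "g \<in> R \<Longrightarrow> Lin g = 0"
proof (induction rule: relsp.induct)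
  case zero then show ?case by (rule Lin_zero)
next
  case (gen g)
  then show ?case by (rule Lin_gens)
next
  case (add f g) then show ?case by (simp add: Lin_add R_fin)
next
  case (smul f c) then show ?case by (simp add: Lin_smul R_fin)
qed

lemma Lin_eqv: "eqv f g \<Longrightarrow> finite (supp f) \<Longrightarrow> finite (supp g) \<Longrightarrow> Lin f = Lin g"
  using Lin_R[of "\<lambda>p. f p - g p"] Lin_diff[of f g] by (simp add: eqv_def)

abbreviation "U \<equiv> U_alpha s br al"

lemma U_Lin: "U X = Lin (rep X)"
  by (simp add: U_alpha_def Lin_def)

lemma U_cls: "finite (supp f) \<Longrightarrow> U (cls s br al f) = Lin f"
  unfolding U_Lin by (rule Lin_eqv[OF rep_cls]) (auto intro: eqv_fin[OF rep_cls])

lemma U_add: "X \<in> UCs \<Longrightarrow> Y \<in> UCs \<Longrightarrow> U (uc_add s br al X Y) = U X + U Y"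
  by (auto elim!: UC_cases simp: uc_add_cls U_cls Lin_add fin_intros)

lemma U_smul: "X \<in> UCs \<Longrightarrow> U (uc_smul s br al c X) = s c (U X)"
  by (auto elim!: UC_cases simp: uc_smul_cls U_cls Lin_smul fin_intros)



lemma U_surj: "\<exists>X\<in>UCs. U X = v"
proof -
  let ?T = "{Lin f | f. finite (supp f)}"
  have sub: "v.subspace ?T"
  proof (rule v.subspaceI)
    have "0 = Lin (\<lambda>_. 0) \<and> finite (supp (\<lambda>_. 0::'k))" by (simp add: Lin_zero supp_zero)
    then show "0 \<in> ?T" by blast
    show "x + y \<in> ?T" if hx: "x \<in> ?T" and hy: "y \<in> ?T" for x y
    proof -
      obtain f g where "finite (supp f)" "finite (supp g)" "x = Lin f" "y = Lin g"
        using hx hy by blast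
      then have "x + y = Lin (\<lambda>q. f q + g q) \<and> finite (supp (\<lambda>q. f q + g q))"
        by (simp add: Lin_add fin_intros)
      then show ?thesis by blast
    qed
    show "s c x \<in> ?T" if hx: "x \<in> ?T" for c x
    proof -
      obtain f where "finite (supp f)" "x = Lin f"
        using hx by blast
      then have "s c x = Lin (\<lambda>q. c * f q) \<and> finite (supp (\<lambda>q. c * f q))"
        by (simp add: Lin_smul fin_intros)
      then show ?thesis by blast
    qed
  qed
  have "{br a b | a b. True} \<subseteq> ?T"
  proof
    fix x assume "x \<in> {br a b | a b. True}"
    then obtain a b where "x = br a b" by blast
    then have "x = Lin (delta (a, b))" by (simp add: Lin_delta)
    moreover have "finite (supp (delta (a, b) :: _ \<Rightarrow> 'k))" by (rule fin_delta)
    ultimately show "x \<in> ?T" by blast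
  qed
  then have "v.span {br a b | a b. True} \<subseteq> ?T" by (rule v.span_minimal[OF _ sub])
  then have "v \<in> ?T" unfolding span_br by blast
  then obtain f where "finite (supp f)" "v = Lin f" by auto
  then have "U (cls s br al f) = v" "cls s br al f \<in> UCs" by (simp_all add: U_cls cls_in_UC)
  then show ?thesis by blast
qed


lemma fs_induct[consumes 1, case_names zero step]:
  fixes f :: "'a \<Rightarrow> 'k"
  assumes f: "finite (supp f)"
    and z: "P (\<lambda>_. 0)"
    and st: "\<And>g p c. finite (supp g) \<Longrightarrow> P g \<Longrightarrow> P (\<lambda>q. g q + c * delta p q)"
  shows "P f"
proof -
  have "\<forall>f. supp f \<subseteq> S \<longrightarrow> P f" if "finite S" for S :: "'a set"
    using that
  proof (induction S rule: finite_induct)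
    case empty
    show ?case
    proof (intro allI impI)
      fix f :: "'a \<Rightarrow> 'k" assume "supp f \<subseteq> {}"
      then have "f = (\<lambda>_. 0)" by (auto simp: supp_def)
      then show "P f" using z by simp
    qed
  next
    case (insert p S)
    show ?case
    proof (intro allI impI)
      fix f :: "'a \<Rightarrow> 'k" assume sf: "supp f \<subseteq> insert p S"
      let ?g = "f(p := 0)"
      have sg: "supp ?g \<subseteq> S" using sf by (auto simp: supp_def)
      then have "finite (supp ?g)" using insert.hyps finite_subset by blast
      moreover have "P ?g" using insert.IH sg by blast
      ultimately have "P (\<lambda>q. ?g q + f p * delta p q)" by (rule st)
      moreover have "(\<lambda>q. ?g q + f p * delta p q) = f"
        by (auto simp: delta_def)
      ultimately show "P f" by simp
    qed
  qed
  then show ?thesis using f by blast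
qed

subsection \<open>Push-forward\<close>

lemma push_sum: "finite S \<Longrightarrow> supp f \<subseteq> S \<Longrightarrow> push \<phi> f q = (\<Sum>p\<in>{p\<in>S. \<phi> p = q}. f p)"
  unfolding push_def by (rule sum.mono_neutral_left) (auto simp: supp_def)

lemma supp_push: "supp (push \<phi> f) \<subseteq> \<phi> ` supp f"
proof
  fix q assume "q \<in> supp (push \<phi> f)"
  then have "push \<phi> f q \<noteq> 0" by (simp add: supp_def)
  then have "{p \<in> supp f. \<phi> p = q} \<noteq> {}" unfolding push_def by (metis sum.empty)
  then show "q \<in> \<phi> ` supp f" by blast
qed

lemma fin_push: "finite (supp f) \<Longrightarrow> finite (supp (push \<phi> (f::_\<Rightarrow>'k)))"
  by (meson finite_imageI finite_subset supp_push)

lemma push_add: "finite (supp f) \<Longrightarrow> finite (supp g) \<Longrightarrow>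
    push \<phi> (\<lambda>q. f q + g q) = (\<lambda>q. push \<phi> f q + push \<phi> (g::_\<Rightarrow>'k) q)"
proof
  fix q assume f: "finite (supp f)" and g: "finite (supp g)"
  let ?S = "supp f \<union> supp g"
  have "push \<phi> (\<lambda>q. f q + g q) q = (\<Sum>p\<in>{p\<in>?S. \<phi> p = q}. f p + g p)"
    using f g supp_add[of f g] by (intro push_sum) auto
  also have "\<dots> = (\<Sum>p\<in>{p\<in>?S. \<phi> p = q}. f p) + (\<Sum>p\<in>{p\<in>?S. \<phi> p = q}. g p)"
    by (simp add: sum.distrib)
  also have "\<dots> = push \<phi> f q + push \<phi> g q"
    using f g push_sum[of ?S f \<phi> q] push_sum[of ?S g \<phi> q] by auto
  finally show "push \<phi> (\<lambda>q. f q + g q) q = push \<phi> f q + push \<phi> g q" .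
qed

lemma push_smul: "push \<phi> (\<lambda>q. c * f q) = (\<lambda>q. c * push \<phi> (f::_\<Rightarrow>'k) q)"
proof
  fix q
  have "push \<phi> (\<lambda>q. c * f q) q = (\<Sum>p\<in>{p\<in>supp f. \<phi> p = q}. c * f p)"
  proof (cases "finite (supp f)")
    case True then show ?thesis using supp_mult[of c f] by (intro push_sum) auto
  next
    case False
    show ?thesis
    proof (cases "c = 0")
      case True then show ?thesis by (simp add: push_def)
    next
      case False
      then have "supp (\<lambda>q. c * f q) = supp f" by (auto simp: supp_def)
      then show ?thesis by (simp add: push_def)
    qed
  qed
  also have "\<dots> = c * push \<phi> f q" by (simp add: push_def sum_distrib_left)
  finally show "push \<phi> (\<lambda>q. c * f q) q = c * push \<phi> f q" .
qed

lemma push_delta: "push \<phi> (delta p) = (delta (\<phi> p) :: _ \<Rightarrow> 'k)"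
proof
  fix q
  show "push \<phi> (delta p) q = (delta (\<phi> p) q :: 'k)"
  proof (cases "\<phi> p = q")
    case True
    then have E: "{p' \<in> supp (delta p :: _ \<Rightarrow> 'k). \<phi> p' = q} = {p}" by (auto simp: supp_delta)
    show ?thesis using True unfolding push_def E by (simp add: delta_def)
  next
    case False
    then have E: "{p' \<in> supp (delta p :: _ \<Rightarrow> 'k). \<phi> p' = q} = {}" by (auto simp: supp_delta)
    show ?thesis using False unfolding push_def E by (simp add: delta_def)
  qed
qed

lemma push_zero: "push \<phi> (\<lambda>_. 0::'k) = (\<lambda>_. 0)"
  by (simp add: push_def supp_zero)

lemma push_neg: "push \<phi> (\<lambda>q. - f q) = (\<lambda>q. - push \<phi> (f::_\<Rightarrow>'k) q)"
  using push_smul[of \<phi> "-1" f] by simp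

lemma push_diff: "finite (supp f) \<Longrightarrow> finite (supp g) \<Longrightarrow>
    push \<phi> (\<lambda>q. f q - g q) = (\<lambda>q. push \<phi> f q - push \<phi> (g::_\<Rightarrow>'k) q)"
  using push_add[of f "\<lambda>q. - g q" \<phi>] push_neg[of \<phi> g] fin_neg[of g] by simp

lemma push_step: "finite (supp g) \<Longrightarrow>
   push \<phi> (\<lambda>q. g q + c * delta p q) = (\<lambda>q. push \<phi> g q + c * (delta (\<phi> p) q :: 'k))"
  by (simp add: push_add fin_intros push_smul push_delta)

lemma push_comp: "finite (supp f) \<Longrightarrow> push \<phi> (push \<psi> f) = push (\<phi> \<circ> \<psi>) (f::_\<Rightarrow>'k)"
proof (induction rule: fs_induct)
  case zero then show ?case by (simp add: push_zero)
next
  case (step g p c)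
  then show ?case by (simp add: push_step fin_push)
qed

lemma push_id: "finite (supp f) \<Longrightarrow> push id f = (f::_\<Rightarrow>'k)"
proof (induction rule: fs_induct)
  case zero then show ?case by (simp add: push_zero)
next
  case (step g p c)
  then show ?case by (simp add: push_step)
qed

lemma range_al: "range al = UNIV" using surj_al by (simp add: surj_def)

lemma lh_add: "leib_hom s br al h \<Longrightarrow> h (x + y) = h x + h y"
  by (simp add: leib_hom_def Vector_Spaces.linear_iff)
lemma lh_smul: "leib_hom s br al h \<Longrightarrow> h (s c x) = s c (h x)"
  by (simp add: leib_hom_def Vector_Spaces.linear_iff)
lemma lh_br: "leib_hom s br al h \<Longrightarrow> h (br x y) = br (h x) (h y)"
  by (simp add: leib_hom_def)
lemma lh_al: "leib_hom s br al h \<Longrightarrow> h (al x) = al (h x)"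
  by (simp add: leib_hom_def)
lemma lh_zero: "leib_hom s br al h \<Longrightarrow> h 0 = 0"
  using lh_smul[of h 0 0] by simp

lemma lh_al_self: "leib_hom s br al al"
  using lin_al al_br by (simp add: leib_hom_def)
lemma lh_id: "leib_hom s br al id"
  using vs by (simp add: leib_hom_def Vector_Spaces.linear_iff)
lemma lh_comp: "leib_hom s br al h \<Longrightarrow> leib_hom s br al h' \<Longrightarrow> leib_hom s br al (h \<circ> h')"
  using vs by (simp add: leib_hom_def Vector_Spaces.linear_iff)

lemma push_gens:
  assumes h: "leib_hom s br al h" and g: "g \<in> rel_gens s br al"
  shows "push (map_prod h h) g \<in> R"
proof -
  from g consider
    (1) a a' b where "g = (\<lambda>q. delta (a + a', b) q - delta (a, b) q - delta (a', b) q)"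
  | (2) a b b' where "g = (\<lambda>q. delta (a, b + b') q - delta (a, b) q - delta (a, b') q)"
  | (3) c a b where "g = (\<lambda>q. delta (s c a, b) q - c * delta (a, b) q)"
  | (4) c a b where "g = (\<lambda>q. delta (a, s c b) q - c * delta (a, b) q)"
  | (5) x1 x2 x3 where "g = (\<lambda>q. - delta (br x1 x2, al x3) q + delta (br x1 x3, al x2) q + delta (al x1, br x2 x3) q)"
    unfolding rel_gens_def by blast
  then show ?thesis
  proof cases
    case 1
    have "push (map_prod h h) g = (\<lambda>q. delta (h a + h a', h b) q - delta (h a, h b) q - delta (h a', h b) q)"
      unfolding 1 by (simp add: push_diff fin_intros push_delta lh_add[OF h])
    also have "\<dots> \<in> rel_gens s br al" unfolding rel_gens_def range_al by blast
    finally show ?thesis by (rule R_gen)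
  next
    case 2
    have "push (map_prod h h) g = (\<lambda>q. delta (h a, h b + h b') q - delta (h a, h b) q - delta (h a, h b') q)"
      unfolding 2 by (simp add: push_diff fin_intros push_delta lh_add[OF h])
    also have "\<dots> \<in> rel_gens s br al" unfolding rel_gens_def range_al by blast
    finally show ?thesis by (rule R_gen)
  next
    case 3
    have "push (map_prod h h) g = (\<lambda>q. delta (s c (h a), h b) q - c * delta (h a, h b) q)"
      unfolding 3 by (simp add: push_diff push_smul fin_intros push_delta lh_smul[OF h])
    also have "\<dots> \<in> rel_gens s br al" unfolding rel_gens_def range_al by blast
    finally show ?thesis by (rule R_gen)
  next
    case 4
    have "push (map_prod h h) g = (\<lambda>q. delta (h a, s c (h b)) q - c * delta (h a, h b) q)"
      unfolding 4 by (simp add: push_diff push_smul fin_intros push_delta lh_smul[OF h])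
    also have "\<dots> \<in> rel_gens s br al" unfolding rel_gens_def range_al by blast
    finally show ?thesis by (rule R_gen)
  next
    case 5
    have "push (map_prod h h) g = (\<lambda>q. - delta (br (h x1) (h x2), al (h x3)) q
        + delta (br (h x1) (h x3), al (h x2)) q + delta (al (h x1), br (h x2) (h x3)) q)"
      unfolding 5 by (simp add: push_add push_neg push_diff fin_intros push_delta lh_br[OF h] lh_al[OF h])
    also have "\<dots> \<in> rel_gens s br al" unfolding rel_gens_def by blast
    finally show ?thesis by (rule R_gen)
  qed
qed

lemma push_R: assumes h: "leib_hom s br al h" and g: "g \<in> R" shows "push (map_prod h h) g \<in> R"
  using g
proof (induction rule: relsp.induct)
  case zero then show ?case by (simp add: push_zero R_zero)
next
  case (gen g) then show ?case by (rule push_gens[OF h])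
next
  case (add f g) then show ?case by (simp add: push_add R_fin R_add)
next
  case (smul f c) then show ?case by (simp add: push_smul R_smul)
qed

lemma push_eqv: "leib_hom s br al h \<Longrightarrow> eqv f g \<Longrightarrow> finite (supp f) \<Longrightarrow> finite (supp g) \<Longrightarrow>
   eqv (push (map_prod h h) f) (push (map_prod h h) g)"
  unfolding eqv_def using push_R[of h "\<lambda>p. f p - g p"] by (simp add: push_diff)

lemma Lin_push: assumes h: "leib_hom s br al h" and f: "finite (supp f)"
  shows "Lin (push (map_prod h h) f) = h (Lin f)"
  using f
proof (induction rule: fs_induct)
  case zero then show ?case by (simp add: push_zero Lin_zero lh_zero[OF h])
next
  case (step g p c)
  then show ?case
    by (simp add: push_step Lin_add Lin_smul fin_intros fin_push Lin_delta lh_add[OF h] lh_smul[OF h] lh_br[OF h])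
qed


subsection \<open>Bilinearity modulo R\<close>

lemmas [trans] = eqv_trans

lemma dL_add: "eqv (delta (x + x', y)) (\<lambda>q. delta (x, y) q + delta (x', y) q)"
proof -
  have "(\<lambda>q. delta (x + x', y) q - delta (x, y) q - delta (x', y) q) \<in> R"
    by (rule R_gen) (unfold rel_gens_def range_al, blast)
  then show ?thesis unfolding eqv_def by (simp add: diff_diff_add)
qed

lemma dR_add: "eqv (delta (y, x + x')) (\<lambda>q. delta (y, x) q + delta (y, x') q)"
proof -
  have "(\<lambda>q. delta (y, x + x') q - delta (y, x) q - delta (y, x') q) \<in> R"
    by (rule R_gen) (unfold rel_gens_def range_al, blast)
  then show ?thesis unfolding eqv_def by (simp add: diff_diff_add)
qed

lemma dL_smul: "eqv (delta (s c x, y)) (\<lambda>q. c * delta (x, y) q)"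
proof -
  have "(\<lambda>q. delta (s c x, y) q - c * delta (x, y) q) \<in> R"
    by (rule R_gen) (unfold rel_gens_def range_al, blast)
  then show ?thesis unfolding eqv_def by simp
qed

lemma dR_smul: "eqv (delta (y, s c x)) (\<lambda>q. c * delta (y, x) q)"
proof -
  have "(\<lambda>q. delta (y, s c x) q - c * delta (y, x) q) \<in> R"
    by (rule R_gen) (unfold rel_gens_def range_al, blast)
  then show ?thesis unfolding eqv_def by simp
qed

lemma dL_zero: "eqv (delta (0, y)) (\<lambda>_. 0)"
  using dL_smul[of 0 0 y] by simp

lemma dR_zero: "eqv (delta (y, 0)) (\<lambda>_. 0)"
  using dR_smul[of y 0 0] by simp

lemma expandL: "finite S \<Longrightarrow>
  eqv (\<lambda>r. \<Sum>p\<in>S. c p * delta (x p, y) r) (delta (\<Sum>p\<in>S. s (c p) (x p), y))"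
proof (induction S rule: finite_induct)
  case empty then show ?case using dL_zero eqv_sym by simp
next
  case (insert p S)
  have "eqv (delta (\<Sum>p\<in>insert p S. s (c p) (x p), y))
      (\<lambda>r. delta (s (c p) (x p), y) r + delta (\<Sum>p\<in>S. s (c p) (x p), y) r)"
    using insert.hyps by (simp add: dL_add)
  also have "eqv \<dots> (\<lambda>r. c p * delta (x p, y) r + (\<Sum>p\<in>S. c p * delta (x p, y) r))"
    by (intro eqv_add dL_smul eqv_sym[OF insert.IH])
  finally have "eqv (delta (\<Sum>p\<in>insert p S. s (c p) (x p), y))
      (\<lambda>r. \<Sum>p\<in>insert p S. c p * delta (x p, y) r)"
    using insert.hyps by simp
  then show ?case by (rule eqv_sym)
qed

lemma expandR: "finite S \<Longrightarrow>
  eqv (\<lambda>r. \<Sum>p\<in>S. c p * delta (y, x p) r) (delta (y, \<Sum>p\<in>S. s (c p) (x p)))"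
proof (induction S rule: finite_induct)
  case empty then show ?case using dR_zero eqv_sym by simp
next
  case (insert p S)
  have "eqv (delta (y, \<Sum>p\<in>insert p S. s (c p) (x p)))
      (\<lambda>r. delta (y, s (c p) (x p)) r + delta (y, \<Sum>p\<in>S. s (c p) (x p)) r)"
    using insert.hyps by (simp add: dR_add)
  also have "eqv \<dots> (\<lambda>r. c p * delta (y, x p) r + (\<Sum>p\<in>S. c p * delta (y, x p) r))"
    by (intro eqv_add dR_smul eqv_sym[OF insert.IH])
  finally have "eqv (delta (y, \<Sum>p\<in>insert p S. s (c p) (x p)))
      (\<lambda>r. \<Sum>p\<in>insert p S. c p * delta (y, x p) r)"
    using insert.hyps by simp
  then show ?case by (rule eqv_sym)
qed

lemma eqv_sum: "finite S \<Longrightarrow> (\<And>p. p \<in> S \<Longrightarrow> eqv (F p) (G p)) \<Longrightarrow>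
  eqv (\<lambda>r. \<Sum>p\<in>S. c p * F p r) (\<lambda>r. \<Sum>p\<in>S. c p * G p r)"
proof (induction S rule: finite_induct)
  case empty then show ?case by (simp add: eqv_refl)
next
  case (insert p S)
  then show ?case by (simp add: eqv_add eqv_smul)
qed

definition Bil :: "('v \<times> 'v \<Rightarrow> 'k) \<Rightarrow> ('v \<times> 'v \<Rightarrow> 'k) \<Rightarrow> ('v \<times> 'v \<Rightarrow> 'k)" where
  "Bil f g = (\<lambda>r. \<Sum>p\<in>supp f. \<Sum>q\<in>supp g.
         f p * g q * delta (br (fst p) (snd p), br (fst q) (snd q)) r)"

lemma Bil_eqv: assumes f: "finite (supp f)" and g: "finite (supp g)"
  shows "eqv (Bil f g) (delta (Lin f, Lin g))"
proof -
  have E: "Bil f g = (\<lambda>r. \<Sum>p\<in>supp f. f p * (\<Sum>q\<in>supp g. g q * delta (br (fst p) (snd p), br (fst q) (snd q)) r))"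
    unfolding Bil_def by (simp add: sum_distrib_left mult.assoc)
  have "eqv (\<lambda>r. \<Sum>p\<in>supp f. f p * (\<Sum>q\<in>supp g. g q * delta (br (fst p) (snd p), br (fst q) (snd q)) r)) (\<lambda>r. \<Sum>p\<in>supp f. f p * delta (br (fst p) (snd p), Lin g) r)"
    using f g by (intro eqv_sum) (simp_all add: expandR Lin_def)
  also have "eqv \<dots> (delta (Lin f, Lin g))"
    unfolding Lin_def by (intro expandL f)
  finally show ?thesis unfolding E .
qed

lemma uc_br_eq: assumes X: "X \<in> UCs" and Y: "Y \<in> UCs"
  shows "uc_br s br al X Y = cls s br al (delta (U X, U Y))"
proof -
  have "uc_br s br al X Y = cls s br al (Bil (rep X) (rep Y))"
    by (simp add: uc_br_def Bil_def)
  also have "\<dots> = cls s br al (delta (U X, U Y))"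
    unfolding U_Lin using rep_fin[OF X] rep_fin[OF Y] by (intro cls_cong Bil_eqv)
  finally show ?thesis .
qed


subsection \<open>The induced maps\<close>

definition UM :: "('v \<Rightarrow> 'v) \<Rightarrow> ('v \<times> 'v \<Rightarrow> 'k) set \<Rightarrow> ('v \<times> 'v \<Rightarrow> 'k) set" where
  "UM h X = cls s br al (push (map_prod h h) (rep X))"

lemma uce_map_UM: "X \<in> UCs \<Longrightarrow> uce_map s br al h X = UM h X"
  by (simp add: uce_map_def UM_def)

lemma uc_alpha_UM: "uc_alpha s br al X = UM al X"
  by (simp add: uc_alpha_def UM_def)

lemma UM_cls: assumes h: "leib_hom s br al h" and f: "finite (supp f)"
  shows "UM h (cls s br al f) = cls s br al (push (map_prod h h) f)"
  unfolding UM_def using f rep_cls[OF f] eqv_fin[OF rep_cls[OF f]]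
  by (intro cls_cong push_eqv[OF h])

lemma UM_UC: "X \<in> UCs \<Longrightarrow> UM h X \<in> UCs"
  unfolding UM_def by (intro cls_in_UC fin_push rep_fin)

lemma UM_comp: assumes h: "leib_hom s br al h" and h': "leib_hom s br al h'" and X: "X \<in> UCs"
  shows "UM h (UM h' X) = UM (h \<circ> h') X"
proof -
  from X obtain f where f: "finite (supp f)" and Xf: "X = cls s br al f" by (rule UC_cases)
  have "UM h (UM h' X) = cls s br al (push (map_prod h h) (push (map_prod h' h') f))"
    unfolding Xf by (simp add: UM_cls h h' f fin_push)
  also have "\<dots> = cls s br al (push (map_prod (h \<circ> h') (h \<circ> h')) f)"
    using f by (simp add: push_comp map_prod_compose)
  also have "\<dots> = UM (h \<circ> h') X"
    unfolding Xf using f lh_comp[OF h h'] by (simp add: UM_cls)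
  finally show ?thesis .
qed

lemma UM_id: assumes X: "X \<in> UCs" shows "UM id X = X"
proof -
  from X obtain f where f: "finite (supp f)" and Xf: "X = cls s br al f" by (rule UC_cases)
  show ?thesis unfolding Xf using f by (simp add: UM_cls lh_id push_id map_prod.id)
qed

lemma UM_add: assumes h: "leib_hom s br al h" and X: "X \<in> UCs" and Y: "Y \<in> UCs"
  shows "UM h (uc_add s br al X Y) = uc_add s br al (UM h X) (UM h Y)"
proof -
  from X obtain f where f: "finite (supp f)" and Xf: "X = cls s br al f" by (rule UC_cases)
  from Y obtain g where g: "finite (supp g)" and Yg: "Y = cls s br al g" by (rule UC_cases)
  show ?thesis unfolding Xf Yg using f g
    by (simp add: uc_add_cls UM_cls[OF h] fin_intros fin_push push_add)
qed

lemma UM_smul: assumes h: "leib_hom s br al h" and X: "X \<in> UCs"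
  shows "UM h (uc_smul s br al c X) = uc_smul s br al c (UM h X)"
proof -
  from X obtain f where f: "finite (supp f)" and Xf: "X = cls s br al f" by (rule UC_cases)
  show ?thesis unfolding Xf using f
    by (simp add: uc_smul_cls UM_cls[OF h] fin_intros fin_push push_smul)
qed

lemma U_UM: assumes h: "leib_hom s br al h" and X: "X \<in> UCs"
  shows "U (UM h X) = h (U X)"
proof -
  from X obtain f where f: "finite (supp f)" and Xf: "X = cls s br al f" by (rule UC_cases)
  show ?thesis unfolding Xf using f
    by (simp add: UM_cls[OF h] U_cls fin_push Lin_push[OF h])
qed

lemma U_delta: "U (cls s br al (delta (a, b))) = br a b"
  by (simp add: U_cls fin_delta Lin_delta)

lemma UM_br: assumes h: "leib_hom s br al h" and X: "X \<in> UCs" and Y: "Y \<in> UCs"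
  shows "UM h (uc_br s br al X Y) = uc_br s br al (UM h X) (UM h Y)"
  using X Y UM_UC[OF X] UM_UC[OF Y]
  by (simp add: uc_br_eq UM_cls[OF h] fin_delta push_delta U_UM[OF h])

lemma UM_alpha: assumes h: "leib_hom s br al h" and X: "X \<in> UCs"
  shows "UM h (uc_alpha s br al X) = uc_alpha s br al (UM h X)"
proof -
  have "h \<circ> al = al \<circ> h" using lh_al[OF h] by (auto simp: fun_eq_iff)
  then show ?thesis unfolding uc_alpha_UM
    using UM_comp[OF h lh_al_self X] UM_comp[OF lh_al_self h X] by simp
qed


lemma lh_inv: assumes h: "leib_hom s br al h" and b: "bij h"
  shows "leib_hom s br al (inv_into UNIV h)"
proof -
  have inj: "inj h" using b by (rule bij_is_inj)
  have hi: "h (inv_into UNIV h x) = x" for x using b by (meson bij_betw_inv_into_right UNIV_I)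
  have "inv_into UNIV h (x + y) = inv_into UNIV h x + inv_into UNIV h y" for x y
    using inj hi[of x] hi[of y] hi[of "x+y"] lh_add[OF h, of "inv_into UNIV h x" "inv_into UNIV h y"]
    by (metis injD)
  moreover have "inv_into UNIV h (s c x) = s c (inv_into UNIV h x)" for c x
    using inj hi[of x] hi[of "s c x"] lh_smul[OF h, of c "inv_into UNIV h x"] by (metis injD)
  moreover have "inv_into UNIV h (br x y) = br (inv_into UNIV h x) (inv_into UNIV h y)" for x y
    using inj hi[of x] hi[of y] hi[of "br x y"] lh_br[OF h, of "inv_into UNIV h x" "inv_into UNIV h y"] by (metis injD)
  moreover have "inv_into UNIV h (al x) = al (inv_into UNIV h x)" for x
    using inj hi[of x] hi[of "al x"] lh_al[OF h, of "inv_into UNIV h x"] by (metis injD)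
  ultimately show ?thesis using vs by (simp add: leib_hom_def Vector_Spaces.linear_iff)
qed

lemma AutL_carrier: "carrier (AutL s br al) = {h. leib_hom s br al h \<and> bij h}"
  by (simp add: AutL_def)

lemma group_AutL: "group (AutL s br al)"
proof (rule groupI)
  show "x \<otimes>\<^bsub>AutL s br al\<^esub> y \<in> carrier (AutL s br al)"
    if "x \<in> carrier (AutL s br al)" "y \<in> carrier (AutL s br al)" for x y
    using that by (auto simp: AutL_def lh_comp bij_comp)
  show "\<one>\<^bsub>AutL s br al\<^esub> \<in> carrier (AutL s br al)"
    by (simp add: AutL_def lh_id)
  show "x \<otimes>\<^bsub>AutL s br al\<^esub> y \<otimes>\<^bsub>AutL s br al\<^esub> z = x \<otimes>\<^bsub>AutL s br al\<^esub> (y \<otimes>\<^bsub>AutL s br al\<^esub> z)" for x y z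
    by (simp add: AutL_def comp_assoc)
  show "\<one>\<^bsub>AutL s br al\<^esub> \<otimes>\<^bsub>AutL s br al\<^esub> x = x" for x
    by (simp add: AutL_def)
  show "\<exists>y\<in>carrier (AutL s br al). y \<otimes>\<^bsub>AutL s br al\<^esub> x = \<one>\<^bsub>AutL s br al\<^esub>"
    if "x \<in> carrier (AutL s br al)" for x
  proof -
    from that have h: "leib_hom s br al x" "bij x" by (auto simp: AutL_def)
    then have "inv_into UNIV x \<in> carrier (AutL s br al)" 
      by (simp add: AutL_def lh_inv bij_imp_bij_inv)
    moreover have "inv_into UNIV x \<circ> x = id" using h(2) by (simp add: bij_is_inj)
    ultimately show ?thesis by (auto simp: AutL_def)
  qed
qed

abbreviation "KU \<equiv> KerU s br al"

lemma uc_br_UC: "X \<in> UCs \<Longrightarrow> Y \<in> UCs \<Longrightarrow> uc_br s br al X Y \<in> UCs"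
  by (simp add: uc_br_eq cls_in_UC fin_delta)

lemma uc_alpha_UC: "X \<in> UCs \<Longrightarrow> uc_alpha s br al X \<in> UCs"
  by (simp add: uc_alpha_UM UM_UC)

lemma UM_inv_cancel: assumes h: "leib_hom s br al h" "bij h" and X: "X \<in> UCs"
  shows "UM (inv_into UNIV h) (UM h X) = X" "UM h (UM (inv_into UNIV h) X) = X"
proof -
  have "inv_into UNIV h \<circ> h = id" "h \<circ> inv_into UNIV h = id" using h(2)
    by (simp_all add: bij_is_inj bij_is_surj surj_iff_all comp_def fun_eq_iff bij_betw_inv_into_right)
  then show "UM (inv_into UNIV h) (UM h X) = X" "UM h (UM (inv_into UNIV h) X) = X"
    using UM_comp[OF lh_inv[OF h] h(1) X] UM_comp[OF h(1) lh_inv[OF h] X] UM_id[OF X] by simp_all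
qed

lemma Stab_carrier: "carrier (StabUce s br al) = {g. uc_aut s br al g \<and> g ` KU = KU}"
  by (simp add: StabUce_def)

lemma KU_UC: "X \<in> KU \<Longrightarrow> X \<in> UCs" by (simp add: KerU_def)

lemma uce_map_in: assumes h: "leib_hom s br al h" "bij h"
  shows "uce_map s br al h \<in> carrier (StabUce s br al)"
proof -
  let ?g = "uce_map s br al h"
  have ext: "?g \<in> extensional UCs" by (simp add: uce_map_def)
  have bij: "bij_betw ?g UCs UCs"
  proof (rule bij_betw_byWitness[where f' = "uce_map s br al (inv_into UNIV h)"])
    show "\<forall>a\<in>UCs. uce_map s br al (inv_into UNIV h) (?g a) = a"
      using UM_inv_cancel[OF h] by (simp add: uce_map_UM UM_UC)
    show "\<forall>a\<in>UCs. ?g (uce_map s br al (inv_into UNIV h) a) = a"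
      using UM_inv_cancel[OF h] by (simp add: uce_map_UM UM_UC)
    show "?g ` UCs \<subseteq> UCs" by (auto simp: uce_map_UM UM_UC)
    show "uce_map s br al (inv_into UNIV h) ` UCs \<subseteq> UCs" by (auto simp: uce_map_UM UM_UC)
  qed
  have aut: "uc_aut s br al ?g"
    unfolding uc_aut_def using ext bij h
    by (simp add: uce_map_UM uc_add_UC uc_smul_UC uc_br_UC uc_alpha_UC UM_add UM_smul UM_br UM_alpha)
  have K1: "?g ` KU \<subseteq> KU"
  proof
    fix Y assume "Y \<in> ?g ` KU"
    then obtain X where X: "X \<in> KU" "Y = ?g X" by blast
    then have "X \<in> UCs" "U X = 0" by (auto simp: KerU_def)
    then show "Y \<in> KU" using X
      by (simp add: KerU_def uce_map_UM UM_UC U_UM[OF h(1)] lh_zero[OF h(1)])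
  qed
  have K2: "KU \<subseteq> ?g ` KU"
  proof
    fix X assume X: "X \<in> KU"
    then have XU: "X \<in> UCs" "U X = 0" by (auto simp: KerU_def)
    let ?Y = "UM (inv_into UNIV h) X"
    have "?Y \<in> KU"
      using XU by (simp add: KerU_def UM_UC U_UM[OF lh_inv[OF h]] lh_zero[OF lh_inv[OF h]])
    moreover have "?g ?Y = X" using XU UM_inv_cancel[OF h] by (simp add: uce_map_UM UM_UC)
    ultimately show "X \<in> ?g ` KU" by (metis image_eqI)
  qed
  show ?thesis using aut K1 K2 by (simp add: Stab_carrier)
qed

lemma uce_map_comp: assumes h: "leib_hom s br al h" and h': "leib_hom s br al h'"
  shows "uce_map s br al (h \<circ> h') = restrict (uce_map s br al h \<circ> uce_map s br al h') UCs"
proof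
  fix X show "uce_map s br al (h \<circ> h') X = restrict (uce_map s br al h \<circ> uce_map s br al h') UCs X"
    by (cases "X \<in> UCs") (simp_all add: uce_map_UM UM_UC UM_comp[OF h h'], simp add: uce_map_def)
qed

lemma uce_map_id: "uce_map s br al id = restrict id UCs"
proof
  fix X show "uce_map s br al id X = restrict id UCs X"
    by (cases "X \<in> UCs") (simp_all add: uce_map_UM UM_id, simp add: uce_map_def)
qed


subsection \<open>Surjectivity\<close>

lemma U_sub: "X \<in> UCs \<Longrightarrow> Y \<in> UCs \<Longrightarrow> U (uc_add s br al X (uc_smul s br al (-1) Y)) = U X - U Y"
  by (simp add: U_add U_smul uc_smul_UC)

definition hv :: "(('v \<times> 'v \<Rightarrow> 'k) set \<Rightarrow> ('v \<times> 'v \<Rightarrow> 'k) set) \<Rightarrow> 'v \<Rightarrow> 'v" where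
  "hv g v = U (g (SOME X. X \<in> UCs \<and> U X = v))"

context
  fixes g assumes g: "g \<in> carrier (StabUce s br al)"
begin

lemma g_aut: "uc_aut s br al g" and gK: "g ` KU = KU"
  using g by (auto simp: Stab_carrier)

lemma g_bij: "bij_betw g UCs UCs" using g_aut by (simp add: uc_aut_def)
lemma g_UC: "X \<in> UCs \<Longrightarrow> g X \<in> UCs" using g_bij bij_betwE by blast
lemma g_ext: "g \<in> extensional UCs" using g_aut by (simp add: uc_aut_def)
lemma g_add: "X \<in> UCs \<Longrightarrow> Y \<in> UCs \<Longrightarrow> g (uc_add s br al X Y) = uc_add s br al (g X) (g Y)"
  using g_aut by (simp add: uc_aut_def)
lemma g_smul: "X \<in> UCs \<Longrightarrow> g (uc_smul s br al c X) = uc_smul s br al c (g X)"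
  using g_aut by (simp add: uc_aut_def)
lemma g_br: "X \<in> UCs \<Longrightarrow> Y \<in> UCs \<Longrightarrow> g (uc_br s br al X Y) = uc_br s br al (g X) (g Y)"
  using g_aut by (simp add: uc_aut_def)
lemma g_alpha: "X \<in> UCs \<Longrightarrow> g (uc_alpha s br al X) = uc_alpha s br al (g X)"
  using g_aut by (simp add: uc_aut_def)

lemma g_sub: "X \<in> UCs \<Longrightarrow> Y \<in> UCs \<Longrightarrow> U (g (uc_add s br al X (uc_smul s br al (-1) Y))) = U (g X) - U (g Y)"
  by (simp add: g_add g_smul uc_smul_UC U_sub g_UC)

lemma hv_wd: assumes X: "X \<in> UCs" shows "hv g (U X) = U (g X)"
proof -
  let ?Y = "SOME Y. Y \<in> UCs \<and> U Y = U X"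
  have "\<exists>Y. Y \<in> UCs \<and> U Y = U X" using X by blast
  then have Y: "?Y \<in> UCs" "U ?Y = U X" by (metis (mono_tags, lifting) someI_ex)+
  let ?Z = "uc_add s br al ?Y (uc_smul s br al (-1) X)"
  have "?Z \<in> UCs" using Y X by (simp add: uc_add_UC uc_smul_UC)
  moreover have "U ?Z = 0" using Y X by (simp add: U_sub)
  ultimately have "?Z \<in> KU" by (simp add: KerU_def)
  then have "g ?Z \<in> KU" using gK by blast
  then have "U (g ?Z) = 0" by (simp add: KerU_def)
  then have "U (g ?Y) = U (g X)" using Y X by (simp add: g_sub)
  then show ?thesis by (simp add: hv_def)
qed

lemma U_surj': obtains X where "X \<in> UCs" "U X = v"
  using U_surj by blast

lemma hv_add: "hv g (x + y) = hv g x + hv g y"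
proof -
  obtain X where X: "X \<in> UCs" "U X = x" by (rule U_surj')
  obtain Y where Y: "Y \<in> UCs" "U Y = y" by (rule U_surj')
  have "hv g (U X + U Y) = hv g (U (uc_add s br al X Y))" using X(1) Y(1) by (simp add: U_add)
  also have "\<dots> = U (g (uc_add s br al X Y))" using X(1) Y(1) by (intro hv_wd uc_add_UC)
  also have "\<dots> = U (g X) + U (g Y)" using X(1) Y(1) by (simp add: g_add U_add g_UC)
  also have "\<dots> = hv g (U X) + hv g (U Y)" using X(1) Y(1) by (simp add: hv_wd)
  finally show ?thesis using X Y by simp
qed

lemma hv_smul: "hv g (s c x) = s c (hv g x)"
proof -
  obtain X where X: "X \<in> UCs" "U X = x" by (rule U_surj')
  have "hv g (s c (U X)) = hv g (U (uc_smul s br al c X))" using X(1) by (simp add: U_smul)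
  also have "\<dots> = U (g (uc_smul s br al c X))" using X(1) by (intro hv_wd uc_smul_UC)
  also have "\<dots> = s c (U (g X))" using X(1) by (simp add: g_smul U_smul g_UC)
  also have "\<dots> = s c (hv g (U X))" using X(1) by (simp add: hv_wd)
  finally show ?thesis using X by simp
qed

lemma U_br: "X \<in> UCs \<Longrightarrow> Y \<in> UCs \<Longrightarrow> U (uc_br s br al X Y) = br (U X) (U Y)"
  by (simp add: uc_br_eq U_delta)

lemma U_alpha: "X \<in> UCs \<Longrightarrow> U (uc_alpha s br al X) = al (U X)"
  by (simp add: uc_alpha_UM U_UM lh_al_self)

lemma hv_br: "hv g (br x y) = br (hv g x) (hv g y)"
proof -
  obtain X where X: "X \<in> UCs" "U X = x" by (rule U_surj')
  obtain Y where Y: "Y \<in> UCs" "U Y = y" by (rule U_surj')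
  have "hv g (br (U X) (U Y)) = hv g (U (uc_br s br al X Y))" using X(1) Y(1) by (simp add: U_br)
  also have "\<dots> = U (g (uc_br s br al X Y))" using X(1) Y(1) by (intro hv_wd uc_br_UC)
  also have "\<dots> = br (U (g X)) (U (g Y))" using X(1) Y(1) by (simp add: g_br U_br g_UC)
  also have "\<dots> = br (hv g (U X)) (hv g (U Y))" using X(1) Y(1) by (simp add: hv_wd)
  finally show ?thesis using X Y by simp
qed

lemma hv_al: "hv g (al x) = al (hv g x)"
proof -
  obtain X where X: "X \<in> UCs" "U X = x" by (rule U_surj')
  have "hv g (al (U X)) = hv g (U (uc_alpha s br al X))" using X(1) by (simp add: U_alpha)
  also have "\<dots> = U (g (uc_alpha s br al X))" using X(1) by (intro hv_wd uc_alpha_UC)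
  also have "\<dots> = al (U (g X))" using X(1) by (simp add: g_alpha U_alpha g_UC)
  also have "\<dots> = al (hv g (U X))" using X(1) by (simp add: hv_wd)
  finally show ?thesis using X by simp
qed

lemma hv_lh: "leib_hom s br al (hv g)"
  using vs hv_add hv_smul hv_br hv_al by (simp add: leib_hom_def Vector_Spaces.linear_iff)

lemma hv_surj: "surj (hv g)"
proof -
  have "w \<in> range (hv g)" for w
  proof -
    obtain Y where Y: "Y \<in> UCs" "U Y = w" by (rule U_surj')
    then obtain X where X: "X \<in> UCs" "Y = g X" using g_bij by (metis bij_betw_iff_bijections)
    then have "hv g (U X) = w" using Y by (simp add: hv_wd)
    then show ?thesis by (metis rangeI)
  qed
  then show ?thesis by blast
qed

lemma hv_inj: "inj (hv g)"
proof (rule injI)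
  fix x y assume e: "hv g x = hv g y"
  obtain X where X: "X \<in> UCs" "U X = x" by (rule U_surj')
  obtain Y where Y: "Y \<in> UCs" "U Y = y" by (rule U_surj')
  let ?Z = "uc_add s br al X (uc_smul s br al (-1) Y)"
  have Z: "?Z \<in> UCs" using X(1) Y(1) by (simp add: uc_add_UC uc_smul_UC)
  have "U (g X) = U (g Y)" using e X Y hv_wd by metis
  then have "U (g ?Z) = 0" using X(1) Y(1) by (simp add: g_sub)
  then have "g ?Z \<in> KU" using Z g_UC by (simp add: KerU_def)
  then obtain W where W: "W \<in> KU" "g W = g ?Z" using gK by (metis imageE)
  have "inj_on g UCs" using g_bij by (simp add: bij_betw_def)
  then have "W = ?Z" using W Z KU_UC inj_onD by metis
  then have "U ?Z = 0" using W by (simp add: KerU_def)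
  then have "U X = U Y" using X(1) Y(1) by (simp add: U_sub)
  then show "x = y" using X Y by simp
qed

lemma hv_bij: "bij (hv g)" using hv_inj hv_surj by (rule bijI)

lemma hv_delta: "UM (hv g) (cls s br al (delta p)) = g (cls s br al (delta p))"
proof -
  obtain a b where p: "p = (a, b)" by fastforce
  obtain A where A: "A \<in> UCs" "U A = a" by (rule U_surj')
  obtain B where B: "B \<in> UCs" "U B = b" by (rule U_surj')
  have c: "cls s br al (delta p) = uc_br s br al A B" using A B p by (simp add: uc_br_eq)
  have "g (uc_br s br al A B) = uc_br s br al (g A) (g B)"
    using A(1) B(1) by (rule g_br)
  also have "\<dots> = cls s br al (delta (U (g A), U (g B)))"
    using A(1) B(1) by (intro uc_br_eq g_UC)
  also have "\<dots> = cls s br al (delta (hv g a, hv g b))"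
    using A B hv_wd by metis
  finally have "g (uc_br s br al A B) = cls s br al (delta (hv g a, hv g b))" .
  moreover have "UM (hv g) (cls s br al (delta p)) = cls s br al (delta (hv g a, hv g b))"
    using p by (simp add: UM_cls[OF hv_lh] fin_delta push_delta)
  ultimately show ?thesis using c by simp
qed

lemma hv_cls: "finite (supp f) \<Longrightarrow> UM (hv g) (cls s br al f) = g (cls s br al f)"
proof (induction rule: fs_induct)
  case zero
  have "cls s br al (\<lambda>_. 0) = uc_smul s br al 0 (cls s br al (delta (0, 0)))"
    by (simp add: uc_smul_cls fin_delta)
  then show ?case
    by (simp add: UM_smul[OF hv_lh] g_smul cls_in_UC fin_delta hv_delta)
next
  case (step f p c)
  have "cls s br al (\<lambda>q. f q + c * delta p q) = uc_add s br al (cls s br al f) (uc_smul s br al c (cls s br al (delta p)))"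
    using step.hyps by (simp add: uc_smul_cls uc_add_cls fin_delta fin_intros)
  then show ?case using step
    by (simp add: UM_smul[OF hv_lh] UM_add[OF hv_lh] g_smul g_add cls_in_UC fin_delta hv_delta uc_smul_UC)
qed

lemma uce_map_hv: "uce_map s br al (hv g) = g"
proof
  fix X show "uce_map s br al (hv g) X = g X"
  proof (cases "X \<in> UCs")
    case True
    then obtain f where "finite (supp f)" "X = cls s br al f" by (rule UC_cases)
    then show ?thesis using True by (simp add: uce_map_UM hv_cls)
  next
    case False
    then show ?thesis using g_ext by (simp add: uce_map_def extensional_def)
  qed
qed

end




lemma Stab_rep: assumes g: "g \<in> carrier (StabUce s br al)"
  obtains h where "leib_hom s br al h" "bij h" "g = uce_map s br al h"
  using hv_lh[OF g] hv_bij[OF g] uce_map_hv[OF g] by metis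

lemma Stab_mult: "g \<otimes>\<^bsub>StabUce s br al\<^esub> g' = restrict (g \<circ> g') UCs"
  by (simp add: StabUce_def)
lemma Stab_one: "\<one>\<^bsub>StabUce s br al\<^esub> = restrict id UCs"
  by (simp add: StabUce_def)

lemma group_Stab: "group (StabUce s br al)"
proof (rule groupI)
  fix x y assume x: "x \<in> carrier (StabUce s br al)" and y: "y \<in> carrier (StabUce s br al)"
  obtain h where h: "leib_hom s br al h" "bij h" "x = uce_map s br al h" using x by (rule Stab_rep)
  obtain h' where h': "leib_hom s br al h'" "bij h'" "y = uce_map s br al h'" using y by (rule Stab_rep)
  have "x \<otimes>\<^bsub>StabUce s br al\<^esub> y = uce_map s br al (h \<circ> h')"
    by (simp add: Stab_mult h h' uce_map_comp)
  then show "x \<otimes>\<^bsub>StabUce s br al\<^esub> y \<in> carrier (StabUce s br al)"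
    using uce_map_in[OF lh_comp[OF h(1) h'(1)] bij_comp[OF h'(2) h(2)]] by simp
next
  show "\<one>\<^bsub>StabUce s br al\<^esub> \<in> carrier (StabUce s br al)"
    using uce_map_in[OF lh_id bij_id] by (simp add: Stab_one uce_map_id)
next
  fix x y z assume x: "x \<in> carrier (StabUce s br al)" and y: "y \<in> carrier (StabUce s br al)"
    and z: "z \<in> carrier (StabUce s br al)"
  have "z X \<in> UCs" if "X \<in> UCs" for X using g_UC[OF z] that by blast
  then show "x \<otimes>\<^bsub>StabUce s br al\<^esub> y \<otimes>\<^bsub>StabUce s br al\<^esub> z =
      x \<otimes>\<^bsub>StabUce s br al\<^esub> (y \<otimes>\<^bsub>StabUce s br al\<^esub> z)"
    by (auto simp: Stab_mult fun_eq_iff)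
next
  fix x assume x: "x \<in> carrier (StabUce s br al)"
  show "\<one>\<^bsub>StabUce s br al\<^esub> \<otimes>\<^bsub>StabUce s br al\<^esub> x = x"
  proof
    fix X show "(\<one>\<^bsub>StabUce s br al\<^esub> \<otimes>\<^bsub>StabUce s br al\<^esub> x) X = x X"
      using g_UC[OF x] g_ext[OF x] by (auto simp: Stab_mult Stab_one extensional_def)
  qed
next
  fix x assume x: "x \<in> carrier (StabUce s br al)"
  obtain h where h: "leib_hom s br al h" "bij h" "x = uce_map s br al h" using x by (rule Stab_rep)
  let ?y = "uce_map s br al (inv_into UNIV h)"
  have hi: "leib_hom s br al (inv_into UNIV h)" "bij (inv_into UNIV h)"
    using h by (simp_all add: lh_inv bij_imp_bij_inv)
  have "inv_into UNIV h \<circ> h = id" using h(2) by (simp add: bij_is_inj)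
  then have "?y \<otimes>\<^bsub>StabUce s br al\<^esub> x = \<one>\<^bsub>StabUce s br al\<^esub>"
    using uce_map_comp[OF hi(1) h(1)] by (simp add: Stab_mult Stab_one h(3) uce_map_id)
  moreover have "?y \<in> carrier (StabUce s br al)" using uce_map_in[OF hi] .
  ultimately show "\<exists>y\<in>carrier (StabUce s br al). y \<otimes>\<^bsub>StabUce s br al\<^esub> x = \<one>\<^bsub>StabUce s br al\<^esub>"
    by blast
qed

lemma uce_map_iso: "uce_map s br al \<in> iso (AutL s br al) (StabUce s br al)"
proof -
  have hom: "uce_map s br al \<in> hom (AutL s br al) (StabUce s br al)"
  proof (rule homI)
    fix h assume "h \<in> carrier (AutL s br al)"
    then show "uce_map s br al h \<in> carrier (StabUce s br al)"
      by (simp add: AutL_carrier uce_map_in)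
  next
    fix h h' assume "h \<in> carrier (AutL s br al)" "h' \<in> carrier (AutL s br al)"
    then show "uce_map s br al (h \<otimes>\<^bsub>AutL s br al\<^esub> h') =
        uce_map s br al h \<otimes>\<^bsub>StabUce s br al\<^esub> uce_map s br al h'"
      by (simp add: AutL_def Stab_mult uce_map_comp)
  qed
  have inj: "inj_on (uce_map s br al) (carrier (AutL s br al))"
  proof (rule inj_onI)
    fix h h' assume h: "h \<in> carrier (AutL s br al)" and h': "h' \<in> carrier (AutL s br al)"
      and e: "uce_map s br al h = uce_map s br al h'"
    show "h = h'"
    proof
      fix v
      obtain X where X: "X \<in> UCs" "U X = v" using U_surj by blast
      have "h v = U (uce_map s br al h X)"
        using h X by (simp add: AutL_carrier uce_map_UM U_UM)
      also have "\<dots> = U (uce_map s br al h' X)" using e by simp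
      also have "\<dots> = h' v"
        using h' X by (simp add: AutL_carrier uce_map_UM U_UM)
      finally show "h v = h' v" .
    qed
  qed
  have surj: "uce_map s br al ` carrier (AutL s br al) = carrier (StabUce s br al)"
  proof
    show "uce_map s br al ` carrier (AutL s br al) \<subseteq> carrier (StabUce s br al)"
      using hom hom_carrier by blast
    show "carrier (StabUce s br al) \<subseteq> uce_map s br al ` carrier (AutL s br al)"
    proof
      fix g assume "g \<in> carrier (StabUce s br al)"
      then obtain h where "leib_hom s br al h" "bij h" "g = uce_map s br al h" by (rule Stab_rep)
      then show "g \<in> uce_map s br al ` carrier (AutL s br al)" by (auto simp: AutL_carrier)
    qed
  qed
  show ?thesis using hom inj surj by (simp add: iso_def bij_betw_def)
qed

end

theorem corollary4p4:
  fixes s :: "'k::field \<Rightarrow> 'v::ab_group_add \<Rightarrow> 'v"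
    and br :: "'v \<Rightarrow> 'v \<Rightarrow> 'v" and al :: "'v \<Rightarrow> 'v"
  assumes "hom_leibniz s br al"
    and "alpha_perfect s br al"
  shows "group (AutL s br al) \<and> group (StabUce s br al)
    \<and> uce_map s br al \<in> iso (AutL s br al) (StabUce s br al)"
proof -
  interpret HL s br al using assms by (rule HL.intro)
  show ?thesis using group_AutL group_Stab uce_map_iso by blast
qed

end
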